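(* The quantum-braided planes ${\mathfrak c}_q^2$ and $({\mathfrak c}_q^2)^*$ are dually paired by $\langle e_1^r e_2^s, f_1^{r'} f_2^{s'}\rangle = \delta_{r,r'}\delta_{s,s'}[r]_{q}![s]_{q}!$.
   Context: $q$ is a primitive $n$-th root of unity with $n=2m+1$ such that $\beta^2=3$ has a solution mod $n$. ${\mathfrak c}_q^2$ is the braided-Hopf algebra generated by $e_1,e_2$ with $e_1^n=e_2^n=0$, $e_2e_1=q^{-m}e_1e_2$, $\underline\Delta e_i=e_i\otimes1+1\otimes e_i$, $\underline\epsilon e_i=0$, $\underline S e_i=-e_i$, braiding $\Psi(e_i\otimes e_i)=qe_i\otimes e_i$, $\Psi(e_1\otimes e_2)=q^{-m}e_2\otimes e_1$, $\Psi(e_2\otimes e_1)=q^{-m}e_1\otimes e_2+(q-1)e_2\otimes e_1$ (living in right modules of $\widetilde{{\mathfrak u}_q(sl_2)}={\mathfrak u}_q(sl_2)\otimes\mathbb{C}[g]/(g^n-1)$). Its dual $({\mathfrak c}_q^2)^*$ is generated by $f_1,f_2$ with the same relations $f_2f_1=q^{-m}f_1f_2$, $f_i^n=0$ and additive braided coproduct, with pairing determined by $\langle e_i,f_j\rangle=\delta_{ij}$. Here $[r]_q=(1-q^r)/(1-q)$ and $[r]_q!=[r]_q[r-1]_q\cdots[1]_q$, $[0]_q!=1$. *)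

theory Defs
  imports Complex_Main "HOL-Number_Theory.Cong"
begin

text \<open>Elements of the quantum-braided plane (and of its dual, which has the same
  relations) are represented by their coefficient functions with respect to the
  PBW basis: x a b is the coefficient of e1^a e2^b (resp. f1^a f2^b), 0 <= a,b < n.
  Elements of the tensor square are coefficient functions of four indices:
  T a b c d is the coefficient of e1^a e2^b (x) e1^c e2^d.\<close>

type_synonym cq_elt = "nat \<Rightarrow> nat \<Rightarrow> complex"
type_synonym cq_elt2 = "nat \<Rightarrow> nat \<Rightarrow> nat \<Rightarrow> nat \<Rightarrow> complex"

definition qint :: "complex \<Rightarrow> nat \<Rightarrow> complex" where
  "qint q r = (1 - q ^ r) / (1 - q)"

definition qfact :: "complex \<Rightarrow> nat \<Rightarrow> complex" where
  "qfact q r = (\<Prod>i\<in>{1..r}. qint q i)"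

definition qbinom :: "complex \<Rightarrow> nat \<Rightarrow> nat \<Rightarrow> complex" where
  "qbinom q r k = (if k \<le> r then qfact q r / (qfact q k * qfact q (r - k)) else 0)"

definition mono :: "nat \<Rightarrow> nat \<Rightarrow> cq_elt" where
  "mono r s = (\<lambda>a b. if a = r \<and> b = s then 1 else 0)"

text \<open>product, from e2 e1 = q^(-m) e1 e2 and e_i^n = 0:
  (e1^a e2^b)(e1^c e2^d) = q^(-m b c) e1^(a+c) e2^(b+d)\<close>
definition cq_mult :: "nat \<Rightarrow> complex \<Rightarrow> nat \<Rightarrow> cq_elt \<Rightarrow> cq_elt \<Rightarrow> cq_elt" where
  "cq_mult n q m x y = (\<lambda>c d. if c < n \<and> d < n then
      (\<Sum>a\<in>{..c}. \<Sum>b\<in>{..d}. x a b * y (c - a) (d - b) * (inverse q ^ m) ^ (b * (c - a)))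
    else 0)"

definition cq_unit :: cq_elt where
  "cq_unit = mono 0 0"

definition cq_counit :: "cq_elt \<Rightarrow> complex" where
  "cq_counit x = x 0 0"

text \<open>braided coproduct (additive on generators, extended as an algebra map into
  the braided tensor product, using Psi(e1 (x) e1) = q e1 (x) e1 and
  Psi(e1 (x) e2) = q^(-m) e2 (x) e1):
  Delta(e1^r e2^s) = sum_{k,j} [r;k]_q [s;j]_q q^(-m (r-k) j) e1^k e2^j (x) e1^(r-k) e2^(s-j)\<close>
definition cq_coprod :: "nat \<Rightarrow> complex \<Rightarrow> nat \<Rightarrow> cq_elt \<Rightarrow> cq_elt2" where
  "cq_coprod n q m x = (\<lambda>a b c d. if a + c < n \<and> b + d < n then
      x (a + c) (b + d) * qbinom q (a + c) a * qbinom q (b + d) b * (inverse q ^ m) ^ (c * b)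
    else 0)"

definition bil :: "nat \<Rightarrow> cq_elt2 \<Rightarrow> cq_elt \<Rightarrow> cq_elt \<Rightarrow> complex" where
  "bil n G x y = (\<Sum>a<n. \<Sum>b<n. \<Sum>c<n. \<Sum>d<n. G a b c d * x a b * y c d)"

definition bil2_right :: "nat \<Rightarrow> cq_elt2 \<Rightarrow> cq_elt \<Rightarrow> cq_elt \<Rightarrow> cq_elt2 \<Rightarrow> complex" where
  "bil2_right n G x y T = (\<Sum>a<n. \<Sum>b<n. \<Sum>c<n. \<Sum>d<n.
      T a b c d * bil n G x (mono a b) * bil n G y (mono c d))"

definition bil2_left :: "nat \<Rightarrow> cq_elt2 \<Rightarrow> cq_elt2 \<Rightarrow> cq_elt \<Rightarrow> cq_elt \<Rightarrow> complex" where
  "bil2_left n G T u v = (\<Sum>a<n. \<Sum>b<n. \<Sum>c<n. \<Sum>d<n.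
      T a b c d * bil n G (mono a b) u * bil n G (mono c d) v)"

definition braided_pairing :: "nat \<Rightarrow> complex \<Rightarrow> nat \<Rightarrow> cq_elt2 \<Rightarrow> bool" where
  "braided_pairing n q m G \<longleftrightarrow>
     (\<forall>x y u. bil n G (cq_mult n q m x y) u = bil2_right n G x y (cq_coprod n q m u)) \<and>
     (\<forall>x u v. bil n G x (cq_mult n q m u v) = bil2_left n G (cq_coprod n q m x) u v) \<and>
     (\<forall>u. bil n G cq_unit u = cq_counit u) \<and>
     (\<forall>x. bil n G x cq_unit = cq_counit x)"

definition gen_normalised :: "nat \<Rightarrow> cq_elt2 \<Rightarrow> bool" where
  "gen_normalised n G \<longleftrightarrow>
     bil n G (mono 1 0) (mono 1 0) = 1 \<and> bil n G (mono 1 0) (mono 0 1) = 0 \<and>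
     bil n G (mono 0 1) (mono 1 0) = 0 \<and> bil n G (mono 0 1) (mono 0 1) = 1"

definition nondegenerate :: "nat \<Rightarrow> cq_elt2 \<Rightarrow> bool" where
  "nondegenerate n G \<longleftrightarrow>
     (\<forall>x. (\<forall>u. bil n G x u = 0) \<longrightarrow> (\<forall>a<n. \<forall>b<n. x a b = 0)) \<and>
     (\<forall>u. (\<forall>x. bil n G x u = 0) \<longrightarrow> (\<forall>a<n. \<forall>b<n. u a b = 0))"

end

theory Submission
  imports Defs
begin


lemma tri_sum:
  fixes f :: "nat \<Rightarrow> nat \<Rightarrow> 'a::comm_monoid_add"
  shows "(\<Sum>a<n. \<Sum>c<n. if a + c < n then f a c else 0) = (\<Sum>(a,c)\<in>{(i,j). i+j<n}. f a c)"
proof -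
  have "(\<Sum>a<n. \<Sum>c<n. if a + c < n then f a c else 0) = (\<Sum>(a,c)\<in>{..<n}\<times>{..<n}. if a + c < n then f a c else 0)"
    by (simp add: sum.cartesian_product)
  also have "\<dots> = (\<Sum>(a,c)\<in>{(i,j). i+j<n}. f a c)"
    by (rule sum.mono_neutral_cong_right) (auto split: if_splits)
  finally show ?thesis .
qed

lemma qfact_0[simp]: "qfact q 0 = 1" by (simp add: qfact_def)

lemma qfact_Suc: "qfact q (Suc a) = qfact q a * qint q (Suc a)"
  unfolding qfact_def by simp

lemma qfact_nz:
  assumes "\<forall>k. 0 < k \<and> k < n \<longrightarrow> q ^ k \<noteq> (1::complex)" "1 < n" "a < n"
  shows "qfact q a \<noteq> 0"
proof -
  have q1: "q \<noteq> 1" using assms(1,2) by (metis power_one_right zero_less_one)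
  show ?thesis unfolding qfact_def qint_def using assms q1
    by (auto simp: prod_zero_iff)
qed

lemma qint_1: "q \<noteq> 1 \<Longrightarrow> qint q 1 = 1" by (simp add: qint_def)

lemma core_sum:
  fixes H :: "nat \<Rightarrow> nat \<Rightarrow> nat \<Rightarrow> nat \<Rightarrow> 'a::comm_monoid_add"
  shows "(\<Sum>c<n. \<Sum>d<n. \<Sum>a\<le>c. \<Sum>b\<le>d. H a b (c-a) (d-b))
       = (\<Sum>a<n. \<Sum>b<n. \<Sum>c<n. \<Sum>d<n. if a + c < n \<and> b + d < n then H a b c d else 0)"
proof -
  have "(\<Sum>c<n. \<Sum>d<n. \<Sum>a\<le>c. \<Sum>b\<le>d. H a b (c-a) (d-b))
      = (\<Sum>c<n. \<Sum>a\<le>c. \<Sum>d<n. \<Sum>b\<le>d. H a b (c-a) (d-b))"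
    by (rule sum.cong[OF refl], rule sum.swap)
  also have "\<dots> = (\<Sum>c<n. \<Sum>a\<le>c. \<Sum>(b,d)\<in>{(i,j). i+j<n}. H a b (c-a) d)"
    by (simp only: sum.triangle_reindex)
  also have "\<dots> = (\<Sum>(a,c)\<in>{(i,j). i+j<n}. \<Sum>(b,d)\<in>{(i,j). i+j<n}. H a b c d)"
    by (simp only: sum.triangle_reindex)
  also have "\<dots> = (\<Sum>a<n. \<Sum>c<n. if a + c < n then (\<Sum>b<n. \<Sum>d<n. if b + d < n then H a b c d else 0) else 0)"
    by (simp only: tri_sum)
  also have "\<dots> = (\<Sum>a<n. \<Sum>c<n. \<Sum>b<n. \<Sum>d<n. if a + c < n \<and> b + d < n then H a b c d else 0)"
    by (intro sum.cong refl) auto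
  also have "\<dots> = (\<Sum>a<n. \<Sum>b<n. \<Sum>c<n. \<Sum>d<n. if a + c < n \<and> b + d < n then H a b c d else 0)"
    by (rule sum.cong[OF refl], rule sum.swap)
  finally show ?thesis .
qed

lemma sum_delta2:
  fixes f :: "nat \<Rightarrow> nat \<Rightarrow> 'a::comm_monoid_add"
  assumes "finite A" "finite B"
  shows "(\<Sum>a\<in>A. \<Sum>b\<in>B. if a = a0 \<and> b = b0 then f a b else 0) = (if a0 \<in> A \<and> b0 \<in> B then f a0 b0 else 0)"
proof -
  have "\<And>a. (\<Sum>b\<in>B. if a = a0 \<and> b = b0 then f a b else 0) = (if a = a0 then (if b0 \<in> B then f a b0 else 0) else 0)"
    using assms by (auto simp: sum.delta')
  then show ?thesis using assms by (simp add: sum.delta')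
qed

lemma sum_mono_left:
  fixes G :: "nat \<Rightarrow> nat \<Rightarrow> complex"
  assumes "a0 < n" "b0 < n"
  shows "(\<Sum>a<n. \<Sum>b<n. G a b * mono a0 b0 a b) = G a0 b0"
proof -
  have "(\<Sum>a<n. \<Sum>b<n. G a b * mono a0 b0 a b) = (\<Sum>a<n. \<Sum>b<n. if a = a0 \<and> b = b0 then G a b else 0)"
    by (intro sum.cong refl) (simp add: mono_def)
  also have "\<dots> = G a0 b0" using assms by (simp add: sum_delta2)
  finally show ?thesis .
qed

lemma bil_mono_left:
  assumes "a0 < n" "b0 < n"
  shows "bil n G (mono a0 b0) y = (\<Sum>c<n. \<Sum>d<n. G a0 b0 c d * y c d)"
proof -
  have "bil n G (mono a0 b0) y = (\<Sum>a<n. \<Sum>b<n. (\<Sum>c<n. \<Sum>d<n. G a b c d * y c d) * mono a0 b0 a b)"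
    unfolding bil_def by (simp add: sum_distrib_right sum_distrib_left ac_simps)
  also have "\<dots> = (\<Sum>c<n. \<Sum>d<n. G a0 b0 c d * y c d)"
    by (rule sum_mono_left[OF assms])
  finally show ?thesis .
qed

lemma bil_mono_right:
  assumes "a0 < n" "b0 < n"
  shows "bil n G x (mono a0 b0) = (\<Sum>a<n. \<Sum>b<n. G a b a0 b0 * x a b)"
proof -
  have "bil n G x (mono a0 b0) = (\<Sum>a<n. \<Sum>b<n. \<Sum>c<n. \<Sum>d<n. (G a b c d * x a b) * mono a0 b0 c d)"
    unfolding bil_def by (simp add: ac_simps)
  also have "\<dots> = (\<Sum>a<n. \<Sum>b<n. G a b a0 b0 * x a b)"
    by (simp add: sum_mono_left[OF assms])
  finally show ?thesis .
qed

lemma bil_mono_mono: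
  assumes "a < n" "b < n" "c < n" "d < n"
  shows "bil n G (mono a b) (mono c d) = G a b c d"
  using assms by (simp add: bil_mono_left sum_mono_left)

lemma cq_mult_mono:
  "cq_mult n q m (mono a b) (mono c d) =
     (\<lambda>x y. if x = a + c \<and> y = b + d \<and> x < n \<and> y < n then (inverse q ^ m) ^ (b * c) else 0)"
proof (intro ext)
  fix x y
  show "cq_mult n q m (mono a b) (mono c d) x y = (if x = a + c \<and> y = b + d \<and> x < n \<and> y < n then (inverse q ^ m) ^ (b * c) else 0)"
  proof (cases "x < n \<and> y < n")
    case True
    have "cq_mult n q m (mono a b) (mono c d) x y = (\<Sum>a'\<in>{..x}. \<Sum>b'\<in>{..y}. mono a b a' b' *
          mono c d (x - a') (y - b') * (inverse q ^ m) ^ (b' * (x - a')))"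
      using True unfolding cq_mult_def by simp
    also have "\<dots> = (\<Sum>a'\<in>{..x}. \<Sum>b'\<in>{..y}. if a' = a \<and> b' = b then
          mono c d (x - a') (y - b') * (inverse q ^ m) ^ (b' * (x - a')) else 0)"
      by (intro sum.cong refl) (simp add: mono_def)
    also have "\<dots> = (if a \<le> x \<and> b \<le> y then mono c d (x - a) (y - b) * (inverse q ^ m) ^ (b * (x - a)) else 0)"
      by (simp add: sum_delta2)
    also have "\<dots> = (if x = a + c \<and> y = b + d \<and> x < n \<and> y < n then (inverse q ^ m) ^ (b * c) else 0)"
      using True by (auto simp: mono_def)
    finally show ?thesis .
  qed (auto simp: cq_mult_def)
qed

lemma coprod_mono:
  "cq_coprod n q m (mono r s) = (\<lambda>a b c d. if a + c = r \<and> b + d = s \<and> r < n \<and> s < n then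
      qbinom q r a * qbinom q s b * (inverse q ^ m) ^ (c * b) else 0)"
  by (auto simp: cq_coprod_def mono_def fun_eq_iff)



lemma q_ne1: "\<forall>k. 0 < k \<and> k < n \<longrightarrow> q ^ k \<noteq> (1::complex) \<Longrightarrow> 1 < n \<Longrightarrow> q \<noteq> 1"
  by (metis power_one_right zero_less_one)

lemma qbinom_mul:
  assumes qok: "\<forall>k. 0 < k \<and> k < n \<longrightarrow> q ^ k \<noteq> (1::complex)" and n1: "1 < n"
    and "k \<le> r" "r < n"
  shows "qbinom q r k * qfact q k * qfact q (r - k) = qfact q r"
proof -
  have "qfact q k \<noteq> 0" "qfact q (r - k) \<noteq> 0"
    using qfact_nz[OF qok n1] assms by auto
  then show ?thesis using assms(3) by (simp add: qbinom_def)
qed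

lemma qint_Suc0: "q \<noteq> 1 \<Longrightarrow> qint q (Suc 0) = 1" by (simp add: qint_def)

lemma qfact_1: "q \<noteq> 1 \<Longrightarrow> qfact q 1 = 1"
  using qfact_Suc[of q 0] by (simp add: qint_Suc0)

lemma qbinom_0:
  assumes qok: "\<forall>k. 0 < k \<and> k < n \<longrightarrow> q ^ k \<noteq> (1::complex)" and n1: "1 < n" and "r < n"
  shows "qbinom q r 0 = 1"
  using qfact_nz[OF qok n1 assms(3)] by (simp add: qbinom_def)

lemma qbinom_1:
  assumes qok: "\<forall>k. 0 < k \<and> k < n \<longrightarrow> q ^ k \<noteq> (1::complex)" and n1: "1 < n" and "1 \<le> r" "r < n"
  shows "qbinom q r 1 = qint q r"
proof -
  obtain s where r: "r = Suc s" using assms(3) by (cases r) auto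
  have "qfact q s \<noteq> 0" using qfact_nz[OF qok n1] r assms by auto
  then show ?thesis using r q_ne1[OF qok n1]
    by (simp add: qbinom_def qfact_Suc qfact_1 qint_Suc0)
qed

lemma qbinom_last:
  assumes qok: "\<forall>k. 0 < k \<and> k < n \<longrightarrow> q ^ k \<noteq> (1::complex)" and n1: "1 < n" and "1 \<le> r" "r < n"
  shows "qbinom q r (r - 1) = qint q r"
proof -
  obtain s where r: "r = Suc s" using assms(3) by (cases r) auto
  have "qfact q s \<noteq> 0" using qfact_nz[OF qok n1] r assms by auto
  then show ?thesis using r q_ne1[OF qok n1]
    by (simp add: qbinom_def qfact_Suc qfact_1 qint_Suc0)
qed

lemma qbinom_same:
  assumes qok: "\<forall>k. 0 < k \<and> k < n \<longrightarrow> q ^ k \<noteq> (1::complex)" and n1: "1 < n" and "r < n"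
  shows "qbinom q r r = 1"
  using qfact_nz[OF qok n1 assms(3)] by (simp add: qbinom_def)

definition GG :: "complex \<Rightarrow> cq_elt2" where
  "GG q = (\<lambda>r s r' s'. if r = r' \<and> s = s' then qfact q r * qfact q s else 0)"

lemma bil_G: "bil n (GG q) x y = (\<Sum>a<n. \<Sum>b<n. qfact q a * qfact q b * x a b * y a b)"
  unfolding bil_def
proof (intro sum.cong refl)
  fix a b assume ab: "a \<in> {..<n}" "b \<in> {..<n}"
  have "(\<Sum>c<n. \<Sum>d<n. GG q a b c d * x a b * y c d) = (\<Sum>c<n. \<Sum>d<n. if c = a \<and> d = b then qfact q a * qfact q b * x a b * y c d else 0)"
    by (intro sum.cong refl) (auto simp: GG_def)
  also have "\<dots> = qfact q a * qfact q b * x a b * y a b" using ab by (simp add: sum_delta2)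
  finally show "(\<Sum>c<n. \<Sum>d<n. GG q a b c d * x a b * y c d) = qfact q a * qfact q b * x a b * y a b" .
qed

lemma bil_G_mono_right: "a < n \<Longrightarrow> b < n \<Longrightarrow> bil n (GG q) x (mono a b) = qfact q a * qfact q b * x a b"
  unfolding bil_G by (rule sum_mono_left)

lemma bil_G_mono_left: "a < n \<Longrightarrow> b < n \<Longrightarrow> bil n (GG q) (mono a b) y = qfact q a * qfact q b * y a b"
proof -
  assume ab: "a < n" "b < n"
  have "bil n (GG q) (mono a b) y = (\<Sum>a'<n. \<Sum>b'<n. (qfact q a' * qfact q b' * y a' b') * mono a b a' b')"
    unfolding bil_G by (simp add: ac_simps)
  also have "\<dots> = qfact q a * qfact q b * y a b" using ab by (rule sum_mono_left)
  finally show ?thesis .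
qed

lemma pair_main:
  assumes qok: "\<forall>k. 0 < k \<and> k < n \<longrightarrow> q ^ k \<noteq> (1::complex)" and n1: "1 < n"
  shows "(\<Sum>c<n. \<Sum>d<n. qfact q c * qfact q d * X c d * (\<Sum>a\<le>c. \<Sum>b\<le>d. Y a b * Z (c-a) (d-b) * w^(b*(c-a))))
    = (\<Sum>a<n. \<Sum>b<n. \<Sum>c<n. \<Sum>d<n. (if a+c<n \<and> b+d<n then X (a+c) (b+d) * qbinom q (a+c) a * qbinom q (b+d) b * w^(c*b) else 0)
          * (qfact q a * qfact q b * Y a b) * (qfact q c * qfact q d * Z c d))"
proof -
  define H where "H a b c d = qfact q (a+c) * qfact q (b+d) * X (a+c) (b+d) * Y a b * Z c d * w^(b*c)" for a b c d
  have "(\<Sum>c<n. \<Sum>d<n. qfact q c * qfact q d * X c d * (\<Sum>a\<le>c. \<Sum>b\<le>d. Y a b * Z (c-a) (d-b) * w^(b*(c-a))))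
      = (\<Sum>c<n. \<Sum>d<n. \<Sum>a\<le>c. \<Sum>b\<le>d. H a b (c-a) (d-b))"
    by (intro sum.cong refl) (auto simp: H_def sum_distrib_left ac_simps intro!: sum.cong)
  also have "\<dots> = (\<Sum>a<n. \<Sum>b<n. \<Sum>c<n. \<Sum>d<n. if a + c < n \<and> b + d < n then H a b c d else 0)"
    by (rule core_sum)
  also have "\<dots> = (\<Sum>a<n. \<Sum>b<n. \<Sum>c<n. \<Sum>d<n. (if a+c<n \<and> b+d<n then X (a+c) (b+d) * qbinom q (a+c) a * qbinom q (b+d) b * w^(c*b) else 0)
          * (qfact q a * qfact q b * Y a b) * (qfact q c * qfact q d * Z c d))"
  proof (intro sum.cong refl)
    fix a b c d assume "a \<in> {..<n}" "b \<in> {..<n}" "c \<in> {..<n}" "d \<in> {..<n}"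
    show "(if a + c < n \<and> b + d < n then H a b c d else 0) = (if a+c<n \<and> b+d<n then X (a+c) (b+d) * qbinom q (a+c) a * qbinom q (b+d) b * w^(c*b) else 0)
          * (qfact q a * qfact q b * Y a b) * (qfact q c * qfact q d * Z c d)"
    proof (cases "a + c < n \<and> b + d < n")
      case True
      have e1: "qbinom q (a+c) a * qfact q a * qfact q c = qfact q (a+c)"
        using qbinom_mul[OF qok n1, of a "a+c"] True by simp
      have e2: "qbinom q (b+d) b * qfact q b * qfact q d = qfact q (b+d)"
        using qbinom_mul[OF qok n1, of b "b+d"] True by simp
      have "X (a+c) (b+d) * qbinom q (a+c) a * qbinom q (b+d) b * w^(c*b) * (qfact q a * qfact q b * Y a b) * (qfact q c * qfact q d * Z c d)
          = (qbinom q (a+c) a * qfact q a * qfact q c) * (qbinom q (b+d) b * qfact q b * qfact q d) * X (a+c) (b+d) * Y a b * Z c d * w^(b*c)"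
        by (simp add: ac_simps)
      also have "\<dots> = H a b c d" by (simp add: e1 e2 H_def)
      finally show ?thesis using True by simp
    next
      case False
      show ?thesis by (simp only: if_not_P[OF False] mult_zero_left)
    qed
  qed
  finally show ?thesis .
qed


lemma ax1:
  assumes qok: "\<forall>k. 0 < k \<and> k < n \<longrightarrow> q ^ k \<noteq> (1::complex)" and n1: "1 < n"
  shows "bil n (GG q) (cq_mult n q m x y) u = bil2_right n (GG q) x y (cq_coprod n q m u)"
proof -
  have "bil n (GG q) (cq_mult n q m x y) u = (\<Sum>c<n. \<Sum>d<n. qfact q c * qfact q d * u c d *
      (\<Sum>a\<le>c. \<Sum>b\<le>d. x a b * y (c-a) (d-b) * (inverse q ^ m)^(b*(c-a))))"
    unfolding bil_G by (intro sum.cong refl) (simp add: cq_mult_def ac_simps)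
  also have "\<dots> = (\<Sum>a<n. \<Sum>b<n. \<Sum>c<n. \<Sum>d<n. (if a+c<n \<and> b+d<n then u (a+c) (b+d) * qbinom q (a+c) a * qbinom q (b+d) b * (inverse q ^ m)^(c*b) else 0)
          * (qfact q a * qfact q b * x a b) * (qfact q c * qfact q d * y c d))"
    by (rule pair_main[OF qok n1])
  also have "\<dots> = bil2_right n (GG q) x y (cq_coprod n q m u)"
    unfolding bil2_right_def by (intro sum.cong refl) (simp add: bil_G_mono_right cq_coprod_def)
  finally show ?thesis .
qed

lemma ax2:
  assumes qok: "\<forall>k. 0 < k \<and> k < n \<longrightarrow> q ^ k \<noteq> (1::complex)" and n1: "1 < n"
  shows "bil n (GG q) x (cq_mult n q m u v) = bil2_left n (GG q) (cq_coprod n q m x) u v"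
proof -
  have "bil n (GG q) x (cq_mult n q m u v) = (\<Sum>c<n. \<Sum>d<n. qfact q c * qfact q d * x c d *
      (\<Sum>a\<le>c. \<Sum>b\<le>d. u a b * v (c-a) (d-b) * (inverse q ^ m)^(b*(c-a))))"
    unfolding bil_G by (intro sum.cong refl) (simp add: cq_mult_def ac_simps)
  also have "\<dots> = (\<Sum>a<n. \<Sum>b<n. \<Sum>c<n. \<Sum>d<n. (if a+c<n \<and> b+d<n then x (a+c) (b+d) * qbinom q (a+c) a * qbinom q (b+d) b * (inverse q ^ m)^(c*b) else 0)
          * (qfact q a * qfact q b * u a b) * (qfact q c * qfact q d * v c d))"
    by (rule pair_main[OF qok n1])
  also have "\<dots> = bil2_left n (GG q) (cq_coprod n q m x) u v"
    unfolding bil2_left_def by (intro sum.cong refl) (simp add: bil_G_mono_left cq_coprod_def)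
  finally show ?thesis .
qed

lemma ax3:
  assumes "1 < n"
  shows "bil n (GG q) cq_unit u = cq_counit u" "bil n (GG q) u cq_unit = cq_counit u"
  using assms by (simp_all add: cq_unit_def cq_counit_def bil_G_mono_left bil_G_mono_right)

lemma GG_pairing:
  assumes qok: "\<forall>k. 0 < k \<and> k < n \<longrightarrow> q ^ k \<noteq> (1::complex)" and n1: "1 < n"
  shows "braided_pairing n q m (GG q)"
  unfolding braided_pairing_def using ax1[OF qok n1] ax2[OF qok n1] ax3[OF n1] by blast

lemma GG_norm:
  assumes qok: "\<forall>k. 0 < k \<and> k < n \<longrightarrow> q ^ k \<noteq> (1::complex)" and n1: "1 < n"
  shows "gen_normalised n (GG q)"
  unfolding gen_normalised_def using n1 q_ne1[OF qok n1]
  by (simp add: bil_G_mono_left) (simp add: mono_def qfact_Suc qint_Suc0)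

lemma GG_nondeg:
  assumes qok: "\<forall>k. 0 < k \<and> k < n \<longrightarrow> q ^ k \<noteq> (1::complex)" and n1: "1 < n"
  shows "nondegenerate n (GG q)"
  unfolding nondegenerate_def
proof (intro conjI allI impI)
  fix x :: cq_elt and a b assume h: "\<forall>u. bil n (GG q) x u = 0" "a < n" "b < n"
  have "qfact q a * qfact q b * x a b = 0" using h bil_G_mono_right[of a n b q x] by simp
  then show "x a b = 0" using qfact_nz[OF qok n1] h by auto
next
  fix u :: cq_elt and a b assume h: "\<forall>x. bil n (GG q) x u = 0" "a < n" "b < n"
  have "qfact q a * qfact q b * u a b = 0" using h bil_G_mono_left[of a n b q u] by simp
  then show "u a b = 0" using qfact_nz[OF qok n1] h by auto
qed


lemma sum_anti:
  fixes f :: "nat \<Rightarrow> nat \<Rightarrow> 'a::comm_monoid_add"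
  assumes "r < n"
  shows "(\<Sum>a<n. \<Sum>c<n. if a + c = r then f a c else 0) = (\<Sum>a\<le>r. f a (r - a))"
proof -
  have "(\<Sum>a<n. \<Sum>c<n. if a + c = r then f a c else 0) = (\<Sum>a<n. if a \<le> r then f a (r - a) else 0)"
  proof (intro sum.cong refl)
    fix a assume "a \<in> {..<n}"
    have ra: "r - a < n" using assms by simp
    have "(\<Sum>c<n. if a + c = r then f a c else 0) = (\<Sum>c<n. if c = r - a then (if a \<le> r then f a c else 0) else 0)"
      by (intro sum.cong refl) auto
    also have "\<dots> = (if a \<le> r then f a (r - a) else 0)"
      using ra by (simp add: sum.delta')
    finally show "(\<Sum>c<n. if a + c = r then f a c else 0) = (if a \<le> r then f a (r - a) else 0)" .
  qed
  also have "\<dots> = (\<Sum>a\<in>{a\<in>{..<n}. a \<le> r}. f a (r - a))"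
    by (rule sum.inter_filter[symmetric]) simp
  also have "{a\<in>{..<n}. a \<le> r} = {..r}" using assms by auto
  finally show ?thesis .
qed

lemma sum4_anti:
  fixes K :: "nat \<Rightarrow> nat \<Rightarrow> nat \<Rightarrow> nat \<Rightarrow> 'a::comm_monoid_add"
  assumes "r < n" "s < n"
  shows "(\<Sum>a<n. \<Sum>b<n. \<Sum>c<n. \<Sum>d<n. if a + c = r \<and> b + d = s then K a b c d else 0)
       = (\<Sum>a\<le>r. \<Sum>b\<le>s. K a b (r - a) (s - b))"
proof -
  have "(\<Sum>a<n. \<Sum>b<n. \<Sum>c<n. \<Sum>d<n. if a + c = r \<and> b + d = s then K a b c d else 0)
      = (\<Sum>a<n. \<Sum>c<n. \<Sum>b<n. \<Sum>d<n. if a + c = r \<and> b + d = s then K a b c d else 0)"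
    by (rule sum.cong[OF refl], rule sum.swap)
  also have "\<dots> = (\<Sum>a<n. \<Sum>c<n. if a + c = r then (\<Sum>b<n. \<Sum>d<n. if b + d = s then K a b c d else 0) else 0)"
    by (intro sum.cong refl) auto
  also have "\<dots> = (\<Sum>a\<le>r. \<Sum>b<n. \<Sum>d<n. if b + d = s then K a b (r - a) d else 0)"
    by (rule sum_anti[OF assms(1)])
  also have "\<dots> = (\<Sum>a\<le>r. \<Sum>b\<le>s. K a b (r - a) (s - b))"
    by (intro sum.cong refl sum_anti[OF assms(2)])
  finally show ?thesis .
qed

lemma bil2_left_coprod_mono:
  assumes "r < n" "s < n"
  shows "bil2_left n G (cq_coprod n q m (mono r s)) u v =
    (\<Sum>a\<le>r. \<Sum>b\<le>s. qbinom q r a * qbinom q s b * (inverse q ^ m) ^ ((r - a) * b) *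
       bil n G (mono a b) u * bil n G (mono (r - a) (s - b)) v)" (is "_ = ?R")
proof -
  have "bil2_left n G (cq_coprod n q m (mono r s)) u v =
     (\<Sum>a<n. \<Sum>b<n. \<Sum>c<n. \<Sum>d<n. if a + c = r \<and> b + d = s then qbinom q r a * qbinom q s b * (inverse q ^ m) ^ (c * b) *
       bil n G (mono a b) u * bil n G (mono c d) v else 0)"
    unfolding bil2_left_def coprod_mono using assms by (intro sum.cong refl) auto
  also have "\<dots> = ?R" by (rule sum4_anti[OF assms])
  finally show ?thesis .
qed

lemma bil2_right_coprod_mono:
  assumes "r < n" "s < n"
  shows "bil2_right n G x y (cq_coprod n q m (mono r s)) =
    (\<Sum>a\<le>r. \<Sum>b\<le>s. qbinom q r a * qbinom q s b * (inverse q ^ m) ^ ((r - a) * b) *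
       bil n G x (mono a b) * bil n G y (mono (r - a) (s - b)))" (is "_ = ?R")
proof -
  have "bil2_right n G x y (cq_coprod n q m (mono r s)) =
     (\<Sum>a<n. \<Sum>b<n. \<Sum>c<n. \<Sum>d<n. if a + c = r \<and> b + d = s then qbinom q r a * qbinom q s b * (inverse q ^ m) ^ (c * b) *
       bil n G x (mono a b) * bil n G y (mono c d) else 0)"
    unfolding bil2_right_def coprod_mono using assms by (intro sum.cong refl) auto
  also have "\<dots> = ?R" by (rule sum4_anti[OF assms])
  finally show ?thesis .
qed

lemma cq_mult_mono_eq:
  assumes "a + c < n" "b + d < n"
  shows "cq_mult n q m (mono a b) (mono c d) = (\<lambda>x y. (inverse q ^ m) ^ (b * c) * mono (a + c) (b + d) x y)"
  unfolding cq_mult_mono using assms by (auto simp: mono_def fun_eq_iff)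


context
  fixes n m :: nat and q :: complex and G :: cq_elt2
  assumes qok: "\<forall>k. 0 < k \<and> k < n \<longrightarrow> q ^ k \<noteq> (1::complex)" and n1: "1 < n"
    and bp: "braided_pairing n q m G" and gn: "gen_normalised n G"
begin

lemma U1: "bil n G (mono 0 0) y = y 0 0"
  using bp unfolding braided_pairing_def cq_unit_def cq_counit_def by blast

lemma U2: "bil n G x (mono 0 0) = x 0 0"
  using bp unfolding braided_pairing_def cq_unit_def cq_counit_def by blast

lemma A1: "bil n G (cq_mult n q m x y) u = bil2_right n G x y (cq_coprod n q m u)"
  using bp unfolding braided_pairing_def by blast

lemma A2: "bil n G x (cq_mult n q m u v) = bil2_left n G (cq_coprod n q m x) u v"
  using bp unfolding braided_pairing_def by blast

lemma leib:
  assumes "(r = 1 \<and> s = 0) \<or> (r = 0 \<and> s = 1)"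
  shows "bil n G (mono r s) (cq_mult n q m u v) = u 0 0 * bil n G (mono r s) v + bil n G (mono r s) u * v 0 0"
proof -
  have rs: "r < n" "s < n" using assms n1 by auto
  have q1: "qbinom q (Suc 0) 0 = 1" "qbinom q (Suc 0) (Suc 0) = 1" "qbinom q 0 0 = 1"
    using qbinom_0[OF qok n1] qbinom_same[OF qok n1] n1 by auto
  have at1: "{..1::nat} = {0, 1}" by auto
  show ?thesis
    unfolding A2 bil2_left_coprod_mono[OF rs] using assms
    by (auto simp: at1 q1 U1 ac_simps)
qed

lemma gen_val:
  assumes rs: "(r = 1 \<and> s = 0) \<or> (r = 0 \<and> s = 1)" and ab: "a < n" "b < n"
  shows "bil n G (mono r s) (mono a b) =
     (if a = 1 \<and> b = 0 then bil n G (mono r s) (mono 1 0) else if a = 0 \<and> b = 1 then bil n G (mono r s) (mono 0 1) else 0)"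
proof (cases a)
  case 0
  show ?thesis
  proof (cases b)
    case 0
    then show ?thesis using \<open>a = 0\<close> U2 rs by (auto simp: mono_def)
  next
    case (Suc b')
    have "mono 0 (Suc b') = cq_mult n q m (mono 0 b') (mono 0 1)"
      using cq_mult_mono_eq[of 0 0 n b' 1 q m] ab Suc by (simp add: fun_eq_iff)
    then have "bil n G (mono r s) (mono a b) = mono 0 b' 0 0 * bil n G (mono r s) (mono 0 1) + bil n G (mono r s) (mono 0 b') * mono 0 1 0 0"
      using leib[OF rs] 0 Suc by simp
    then show ?thesis using 0 Suc by (auto simp: mono_def)
  qed
next
  case (Suc a')
  have "mono (Suc a') b = cq_mult n q m (mono 1 0) (mono a' b)"
    using cq_mult_mono_eq[of 1 a' n 0 b q m] ab Suc by (simp add: fun_eq_iff)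
  then have "bil n G (mono r s) (mono a b) = mono 1 0 0 0 * bil n G (mono r s) (mono a' b) + bil n G (mono r s) (mono 1 0) * mono a' b 0 0"
    using leib[OF rs] Suc by simp
  then show ?thesis using Suc by (auto simp: mono_def)
qed

lemma e1_val: "a < n \<Longrightarrow> b < n \<Longrightarrow> bil n G (mono 1 0) (mono a b) = (if a = 1 \<and> b = 0 then 1 else 0)"
  using gen_val[of 1 0 a b] gn unfolding gen_normalised_def by auto

lemma e2_val: "a < n \<Longrightarrow> b < n \<Longrightarrow> bil n G (mono 0 1) (mono a b) = (if a = 0 \<and> b = 1 then 1 else 0)"
  using gen_val[of 0 1 a b] gn unfolding gen_normalised_def by auto

lemma stepA:
  assumes "Suc a < n" "b < n" "c < n" "d < n"
  shows "bil n G (mono (Suc a) b) (mono c d) = (if 1 \<le> c then qint q c * bil n G (mono a b) (mono (c - 1) d) else 0)"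
proof -
  have me: "mono (Suc a) b = cq_mult n q m (mono 1 0) (mono a b)"
    using cq_mult_mono_eq[of 1 a n 0 b q m] assms by (simp add: fun_eq_iff)
  have "bil n G (mono (Suc a) b) (mono c d) = (\<Sum>a'\<le>c. \<Sum>b'\<le>d. qbinom q c a' * qbinom q d b' * (inverse q ^ m) ^ ((c - a') * b') *
       bil n G (mono 1 0) (mono a' b') * bil n G (mono a b) (mono (c - a') (d - b')))"
    unfolding me A1 bil2_right_coprod_mono[OF assms(3,4)] ..
  also have "\<dots> = (\<Sum>a'\<le>c. \<Sum>b'\<le>d. if a' = 1 \<and> b' = 0 then qbinom q c 1 * qbinom q d 0 *
       bil n G (mono a b) (mono (c - 1) d) else 0)" (is "(\<Sum>a'\<le>c. \<Sum>b'\<le>d. ?l a' b') = (\<Sum>a'\<le>c. \<Sum>b'\<le>d. ?r a' b')")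
  proof (intro sum.cong refl)
    fix a' b' assume "a' \<in> {..c}" "b' \<in> {..d}"
    then have "a' < n" "b' < n" "c - a' < n" "d - b' < n" using assms by auto
    then show "?l a' b' = ?r a' b'" using \<open>a' \<in> {..c}\<close> \<open>b' \<in> {..d}\<close> unfolding e1_val[OF \<open>a' < n\<close> \<open>b' < n\<close>] by auto
  qed
  also have "\<dots> = (if 1 \<le> c then qbinom q c 1 * qbinom q d 0 * bil n G (mono a b) (mono (c - 1) d) else 0)"
    by (simp add: sum_delta2)
  also have "\<dots> = (if 1 \<le> c then qint q c * bil n G (mono a b) (mono (c - 1) d) else 0)"
    using qbinom_1[OF qok n1, of c] qbinom_0[OF qok n1, of d] assms by auto
  finally show ?thesis .
qed

lemma stepB:
  assumes "a < n" "Suc b < n" "c < n" "d < n"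
  shows "bil n G (mono a (Suc b)) (mono c d) = (if 1 \<le> d then qint q d * bil n G (mono a b) (mono c (d - 1)) else 0)"
proof -
  have me: "mono a (Suc b) = cq_mult n q m (mono a b) (mono 0 1)"
    using cq_mult_mono_eq[of a 0 n b 1 q m] assms by (simp add: fun_eq_iff)
  have "bil n G (mono a (Suc b)) (mono c d) = (\<Sum>a'\<le>c. \<Sum>b'\<le>d. qbinom q c a' * qbinom q d b' * (inverse q ^ m) ^ ((c - a') * b') *
       bil n G (mono a b) (mono a' b') * bil n G (mono 0 1) (mono (c - a') (d - b')))"
    unfolding me A1 bil2_right_coprod_mono[OF assms(3,4)] ..
  also have "\<dots> = (\<Sum>a'\<le>c. \<Sum>b'\<le>d. if a' = c \<and> b' = d - 1 then (if 1 \<le> d then qbinom q c c * qbinom q d (d - 1) *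
       bil n G (mono a b) (mono c (d - 1)) else 0) else 0)" (is "(\<Sum>a'\<le>c. \<Sum>b'\<le>d. ?l a' b') = (\<Sum>a'\<le>c. \<Sum>b'\<le>d. ?r a' b')")
  proof (intro sum.cong refl)
    fix a' b' assume "a' \<in> {..c}" "b' \<in> {..d}"
    then have "a' < n" "b' < n" "c - a' < n" "d - b' < n" using assms by auto
    then show "?l a' b' = ?r a' b'" using \<open>a' \<in> {..c}\<close> \<open>b' \<in> {..d}\<close> unfolding e2_val[OF \<open>c - a' < n\<close> \<open>d - b' < n\<close>] by auto
  qed
  also have "\<dots> = (if 1 \<le> d then qbinom q c c * qbinom q d (d - 1) * bil n G (mono a b) (mono c (d - 1)) else 0)"
    by (simp add: sum_delta2)
  also have "\<dots> = (if 1 \<le> d then qint q d * bil n G (mono a b) (mono c (d - 1)) else 0)"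
    using qbinom_last[OF qok n1, of d] qbinom_same[OF qok n1, of c] assms by auto
  finally show ?thesis .
qed

lemma determined_b0: "a < n \<Longrightarrow> c < n \<Longrightarrow> d < n \<Longrightarrow>
   bil n G (mono a 0) (mono c d) = (if a = c \<and> 0 = d then qfact q a * qfact q 0 else 0)"
proof (induction a arbitrary: c d)
  case 0
  then show ?case by (simp add: U1) (auto simp: mono_def)
next
  case (Suc a)
  show ?case
  proof (cases c)
    case 0
    then show ?thesis using stepA[of a 0 c d] Suc.prems n1 by simp
  next
    case (Suc c')
    then show ?thesis using stepA[of a 0 c d] Suc.prems Suc.IH[of c' d] n1
      by (auto simp: qfact_Suc)
  qed
qed

lemma determined: "b < n \<Longrightarrow> a < n \<Longrightarrow> c < n \<Longrightarrow> d < n \<Longrightarrow>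
   bil n G (mono a b) (mono c d) = (if a = c \<and> b = d then qfact q a * qfact q b else 0)"
proof (induction b arbitrary: a c d)
  case 0
  then show ?case using determined_b0 by simp
next
  case (Suc b)
  show ?case
  proof (cases d)
    case 0
    then show ?thesis using stepB[of a b c d] Suc.prems by simp
  next
    case (Suc d')
    then show ?thesis using stepB[of a b c d] Suc.prems Suc.IH[of a c d']
      by (auto simp: qfact_Suc)
  qed
qed

end


theorem lemma6p2:
  fixes q :: complex and m n :: nat
  assumes "n = 2 * m + 1"
    and "1 < n"
    and "q ^ n = 1"
    and "\<forall>k. 0 < k \<and> k < n \<longrightarrow> q ^ k \<noteq> 1"
    and "\<exists>\<beta>::int. [\<beta>\<^sup>2 = 3] (mod int n)"
  defines "G \<equiv> (\<lambda>r s r' s'. if r = r' \<and> s = s' then qfact q r * qfact q s else 0)"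
  shows "braided_pairing n q m G \<and> gen_normalised n G \<and> nondegenerate n G \<and>
         (\<forall>G'. braided_pairing n q m G' \<and> gen_normalised n G' \<longrightarrow>
            (\<forall>r<n. \<forall>s<n. \<forall>r'<n. \<forall>s'<n.
               bil n G' (mono r s) (mono r' s') = bil n G (mono r s) (mono r' s')))"
  proof -
  have qok: "\<forall>k. 0 < k \<and> k < n \<longrightarrow> q ^ k \<noteq> 1" by (rule assms(4))
  have n1: "1 < n" by (rule assms(2))
  have GGe: "G = GG q" unfolding G_def GG_def ..
  have last: "\<forall>G'. braided_pairing n q m G' \<and> gen_normalised n G' \<longrightarrow>
            (\<forall>r<n. \<forall>s<n. \<forall>r'<n. \<forall>s'<n.
               bil n G' (mono r s) (mono r' s') = bil n (GG q) (mono r s) (mono r' s'))"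
  proof (intro allI impI)
    fix G' r s r' s'
    assume h: "braided_pairing n q m G' \<and> gen_normalised n G'" "r < n" "s < n" "r' < n" "s' < n"
    have "bil n G' (mono r s) (mono r' s') = (if r = r' \<and> s = s' then qfact q r * qfact q s else 0)"
      using determined[OF qok n1, of m G'] h by blast
    also have "\<dots> = bil n (GG q) (mono r s) (mono r' s')"
      using h by (simp add: bil_G_mono_left) (auto simp: mono_def)
    finally show "bil n G' (mono r s) (mono r' s') = bil n (GG q) (mono r s) (mono r' s')" .
  qed
  show ?thesis unfolding GGe
    using GG_pairing[OF qok n1] GG_norm[OF qok n1] GG_nondeg[OF qok n1] last by blast
qed

end
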